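(* Let $T$ be a Lie triple system over a field of characteristic zero and $U(T)$ its universal enveloping algebra. For $a,c\in T$ let $D_{a,c}\colon U(T)\to U(T)$, $D_{a,c}(x)=a(cx)-c(ax)$. Then for all $n\ge 1$ and $a,b,c\in T$, $$(c^n,a,b)=\frac{n}{2}\,c^{n-1}[a,c,b]-\frac12\sum_{i=0}^{n-2}\bigl(c^i,\,D_{a,c}(c^{n-1-i}),\,b\bigr).$$ Moreover, for all $n\ge 1$ and $a,c\in T$, $$c^n a=\tfrac12\,(ac^n+c^na)+\sum_{i=0}^{n-2}c^i\,(a,c,c^{n-1-i}).$$
   Context: A Lie triple system (L.t.s.) is a vector space $T$ with a trilinear product $[x,y,z]$ satisfying $[x,x,y]=0$, $[x,y,z]+[y,z,x]+[z,x,y]=0$, and $[a,b,[x,y,z]]=[[a,b,x],y,z]+[x,[a,b,y],z]+[x,y,[a,b,z]]$. For a unital nonassociative algebra $A$ with associator $(x,y,z)=(xy)z-x(yz)$, $\mathrm{LN_{alt}}(A)=\{a\in A : (a,x,y)=-(x,a,y)\ \forall x,y\in A\}$ is an L.t.s. with $[a,b,c]=a(bc)-b(ac)-c(ab)+c(ba)$. The universal enveloping algebra $U(T)$ is the unital algebra with an L.t.s. monomorphism $T\to\mathrm{LN_{alt}}(U(T))$ (elements of $T$ identified with their images) such that $ab=ba$ for $a,b\in T$, universal for L.t.s. homomorphisms into $\mathrm{LN_{alt}}(A)$ with this commutation property. For $c\in T$ the subalgebra generated by $c$ is associative, so $c^n$ is well defined ($c^0=1$). *)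

theory Defs
  imports Main
begin

text \<open>Structures are given by explicit operations on a whole type (carrier = UNIV).\<close>

record ('k, 'a) vspace =
  add  :: "'a \<Rightarrow> 'a \<Rightarrow> 'a"
  zer  :: 'a
  neg  :: "'a \<Rightarrow> 'a"
  smul :: "'k \<Rightarrow> 'a \<Rightarrow> 'a"

record ('k, 'a) alg = "('k, 'a) vspace" +
  mul :: "'a \<Rightarrow> 'a \<Rightarrow> 'a"
  one :: 'a

record ('k, 'a) lts = "('k, 'a) vspace" +
  trip :: "'a \<Rightarrow> 'a \<Rightarrow> 'a \<Rightarrow> 'a"

definition sub :: "('k, 'a, 'b) vspace_scheme \<Rightarrow> 'a \<Rightarrow> 'a \<Rightarrow> 'a" where
  "sub V x y = add V x (neg V y)"

definition vs_axioms :: "('k::field, 'a, 'b) vspace_scheme \<Rightarrow> bool" where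
  "vs_axioms V \<longleftrightarrow>
     (\<forall>x y z. add V (add V x y) z = add V x (add V y z)) \<and>
     (\<forall>x y. add V x y = add V y x) \<and>
     (\<forall>x. add V (zer V) x = x) \<and>
     (\<forall>x. add V (neg V x) x = zer V) \<and>
     (\<forall>r x y. smul V r (add V x y) = add V (smul V r x) (smul V r y)) \<and>
     (\<forall>r s x. smul V (r + s) x = add V (smul V r x) (smul V s x)) \<and>
     (\<forall>r s x. smul V (r * s) x = smul V r (smul V s x)) \<and>
     (\<forall>x. smul V 1 x = x)"

definition linear_map :: "('k, 'a, 'c) vspace_scheme \<Rightarrow> ('k, 'b, 'd) vspace_scheme \<Rightarrow> ('a \<Rightarrow> 'b) \<Rightarrow> bool" where
  "linear_map V W f \<longleftrightarrow>
     (\<forall>x y. f (add V x y) = add W (f x) (f y)) \<and> (\<forall>r x. f (smul V r x) = smul W r (f x))"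

definition unital_algebra :: "('k::field, 'a) alg \<Rightarrow> bool" where
  "unital_algebra A \<longleftrightarrow> vs_axioms A \<and>
     (\<forall>x. linear_map A A (mul A x)) \<and> (\<forall>y. linear_map A A (\<lambda>x. mul A x y)) \<and>
     (\<forall>x. mul A (one A) x = x) \<and> (\<forall>x. mul A x (one A) = x)"

definition assoc :: "('k, 'a) alg \<Rightarrow> 'a \<Rightarrow> 'a \<Rightarrow> 'a \<Rightarrow> 'a" where
  "assoc A x y z = sub A (mul A (mul A x y) z) (mul A x (mul A y z))"

definition LN_alt :: "('k, 'a) alg \<Rightarrow> 'a set" where
  "LN_alt A = {a. \<forall>x y. assoc A a x y = neg A (assoc A x a y)}"

definition alt_trip :: "('k, 'a) alg \<Rightarrow> 'a \<Rightarrow> 'a \<Rightarrow> 'a \<Rightarrow> 'a" where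
  "alt_trip A a b c =
     add A (sub A (sub A (mul A a (mul A b c)) (mul A b (mul A a c))) (mul A c (mul A a b)))
           (mul A c (mul A b a))"

definition lts_axioms :: "('k::field, 'a) lts \<Rightarrow> bool" where
  "lts_axioms T \<longleftrightarrow> vs_axioms T \<and>
     (\<forall>y z. linear_map T T (\<lambda>x. trip T x y z)) \<and>
     (\<forall>x z. linear_map T T (\<lambda>y. trip T x y z)) \<and>
     (\<forall>x y. linear_map T T (\<lambda>z. trip T x y z)) \<and>
     (\<forall>x y. trip T x x y = zer T) \<and>
     (\<forall>x y z. add T (add T (trip T x y z) (trip T y z x)) (trip T z x y) = zer T) \<and>
     (\<forall>a b x y z. trip T a b (trip T x y z) =
        add T (add T (trip T (trip T a b x) y z) (trip T x (trip T a b y) z))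
              (trip T x y (trip T a b z)))"

definition lts_hom_LN :: "('k, 't) lts \<Rightarrow> ('k, 'a) alg \<Rightarrow> ('t \<Rightarrow> 'a) \<Rightarrow> bool" where
  "lts_hom_LN T A f \<longleftrightarrow> linear_map T A f \<and> (\<forall>x. f x \<in> LN_alt A) \<and>
     (\<forall>x y z. f (trip T x y z) = alt_trip A (f x) (f y) (f z))"

definition commuting_image :: "('k, 'a) alg \<Rightarrow> ('t \<Rightarrow> 'a) \<Rightarrow> bool" where
  "commuting_image A f \<longleftrightarrow> (\<forall>x y. mul A (f x) (f y) = mul A (f y) (f x))"

definition unital_alg_hom :: "('k, 'a) alg \<Rightarrow> ('k, 'b) alg \<Rightarrow> ('a \<Rightarrow> 'b) \<Rightarrow> bool" where
  "unital_alg_hom A B h \<longleftrightarrow> linear_map A B h \<and>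
     (\<forall>x y. h (mul A x y) = mul B (h x) (h y)) \<and> h (one A) = one B"

text \<open>U (with embedding \<iota>) is a universal enveloping algebra of T.  The universal property
  is required for all unital algebras whose carrier is the type of U.\<close>
definition is_UEA :: "('k::field, 't) lts \<Rightarrow> ('k, 'u) alg \<Rightarrow> ('t \<Rightarrow> 'u) \<Rightarrow> bool" where
  "is_UEA T U \<iota> \<longleftrightarrow> unital_algebra U \<and> lts_hom_LN T U \<iota> \<and> inj \<iota> \<and> commuting_image U \<iota> \<and>
     (\<forall>(B :: ('k, 'u) alg) \<phi>. unital_algebra B \<and> lts_hom_LN T B \<phi> \<and> commuting_image B \<phi> \<longrightarrow>
        (\<exists>!\<psi>. unital_alg_hom U B \<psi> \<and> \<psi> \<circ> \<iota> = \<phi>))"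

primrec apow :: "('k, 'a) alg \<Rightarrow> 'a \<Rightarrow> nat \<Rightarrow> 'a" where
  "apow A c 0 = one A"
| "apow A c (Suc n) = mul A c (apow A c n)"

definition lsum :: "('k, 'a, 'b) vspace_scheme \<Rightarrow> (nat \<Rightarrow> 'a) \<Rightarrow> nat list \<Rightarrow> 'a" where
  "lsum V f xs = foldr (\<lambda>i acc. add V (f i) acc) xs (zer V)"

definition Dop :: "('k, 'a) alg \<Rightarrow> 'a \<Rightarrow> 'a \<Rightarrow> 'a \<Rightarrow> 'a" where
  "Dop A a c x = sub A (mul A a (mul A c x)) (mul A c (mul A a x))"

end

theory Submission imports Defs begin
context ab_group_add begin
lemma g1: "x = y + z - w \<Longrightarrow> y = x - z + w" by (simp add: algebra_simps)
lemma g2: "x - y = z + w \<Longrightarrow> y = x - z - w" by (simp add: algebra_simps)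
lemma E1_aux: "t - u = -(t - v) \<Longrightarrow> (t - v) + (t - v) = u - v" by (simp add: algebra_simps)
lemma N1_aux: "p - q = -(r - s) \<Longrightarrow> q = p + r - s"
  by (simp add: algebra_simps)
end

locale UA = fixes U :: "('k::field_char_0,'u) alg" assumes UA: "unital_algebra U"
begin
abbreviation M (infixl "\<cdot>" 70) where "x \<cdot> y \<equiv> mul U x y"
abbreviation Pl (infixl "\<oplus>" 65) where "x \<oplus> y \<equiv> add U x y"
abbreviation Mi (infixl "\<ominus>" 65) where "x \<ominus> y \<equiv> sub U x y"
lemma vs: "vs_axioms U" using UA unfolding unital_algebra_def by auto
sublocale G: ab_group_add "add U" "zer U" "sub U" "neg U"
  apply unfold_locales using vs unfolding vs_axioms_def sub_def by auto

lemma mul_add_r: "mul U x (add U y z) = add U (mul U x y) (mul U x z)"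
  using UA unfolding unital_algebra_def linear_map_def by blast
lemma mul_add_l: "mul U (add U y z) x = add U (mul U y x) (mul U z x)"
  using UA unfolding unital_algebra_def linear_map_def by blast
lemma mul_smul_r: "mul U x (smul U r y) = smul U r (mul U x y)"
  using UA unfolding unital_algebra_def linear_map_def by blast
lemma mul_smul_l: "mul U (smul U r y) x = smul U r (mul U y x)"
  using UA unfolding unital_algebra_def linear_map_def by blast
lemma one_l[simp]: "mul U (one U) x = x"
  using UA unfolding unital_algebra_def by blast
lemma one_r[simp]: "mul U x (one U) = x"
  using UA unfolding unital_algebra_def by blast

lemma smul_add: "smul U r (add U x y) = add U (smul U r x) (smul U r y)"
  using vs unfolding vs_axioms_def by blast
lemma smul_sadd: "smul U (r + s) x = add U (smul U r x) (smul U s x)"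
  using vs unfolding vs_axioms_def by blast
lemma smul_smul: "smul U r (smul U s x) = smul U (r * s) x"
  using vs unfolding vs_axioms_def by simp
lemma smul_1[simp]: "smul U 1 x = x"
  using vs unfolding vs_axioms_def by blast
lemma smul_0[simp]: "smul U 0 x = zer U"
proof -
  have "smul U (0+0) x = add U (smul U 0 x) (smul U 0 x)" by (rule smul_sadd)
  thus ?thesis by simp
qed
lemma smul_neg1: "smul U (-1) x = neg U x"
proof -
  have "smul U (1 + -1) x = add U (smul U 1 x) (smul U (-1) x)" by (rule smul_sadd)
  hence "zer U = add U x (smul U (-1) x)" by simp
  hence "add U x (smul U (-1) x) = zer U" by simp
  thus ?thesis using G.minus_unique by metis
qed
lemma smul_neg: "smul U r (neg U x) = neg U (smul U r x)"
  by (simp only: smul_neg1[symmetric] smul_smul mult.commute)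
lemma smul_sub: "smul U r (sub U x y) = sub U (smul U r x) (smul U r y)"
  by (simp only: sub_def smul_add smul_neg)
lemma smul_zero[simp]: "smul U r (zer U) = zer U"
proof -
  have "smul U r (zer U) = smul U r (smul U 0 (zer U))" by simp
  also have "\<dots> = smul U (r*0) (zer U)" by (rule smul_smul)
  finally show ?thesis by simp
qed
lemma mul_zero_r[simp]: "mul U x (zer U) = zer U"
proof -
  have "mul U x (zer U) = mul U x (smul U 0 (zer U))" by simp
  also have "\<dots> = smul U 0 (mul U x (zer U))" by (rule mul_smul_r)
  finally show ?thesis by simp
qed
lemma mul_zero_l[simp]: "mul U (zer U) x = zer U"
proof -
  have "mul U (zer U) x = mul U (smul U 0 (zer U)) x" by simp
  also have "\<dots> = smul U 0 (mul U (zer U) x)" by (rule mul_smul_l)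
  finally show ?thesis by simp
qed
lemma mul_neg_r: "mul U x (neg U y) = neg U (mul U x y)"
  by (simp only: smul_neg1[symmetric] mul_smul_r)
lemma mul_neg_l: "mul U (neg U y) x = neg U (mul U y x)"
  by (simp only: smul_neg1[symmetric] mul_smul_l)
lemma mul_sub_r: "mul U x (sub U y z) = sub U (mul U x y) (mul U x z)"
  by (simp only: sub_def mul_add_r mul_neg_r)
lemma mul_sub_l: "mul U (sub U y z) x = sub U (mul U y x) (mul U z x)"
  by (simp only: sub_def mul_add_l mul_neg_l)

lemmas bil = mul_add_r mul_add_l mul_sub_r mul_sub_l mul_neg_r mul_neg_l

lemma half_add: "smul U (1/2) (add U x x) = x"
proof -
  have "smul U (1/2) (add U x x) = smul U (1/2 + 1/2) x" by (simp only: smul_add smul_sadd)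
  also have "(1/2 + 1/2 :: 'k) = 1" by simp
  finally show ?thesis by simp
qed
lemma two_cancel: "add U x x = add U y y \<Longrightarrow> x = y"
  by (metis half_add)
lemma smul_of_nat_Suc: "smul U (of_nat (Suc n)) x = add U (smul U (of_nat n) x) x"
  by (simp add: smul_sadd G.add.commute)

lemma N1: assumes "n \<in> LN_alt U"
  shows "mul U n (mul U x y) = sub U (add U (mul U (mul U n x) y) (mul U (mul U x n) y)) (mul U x (mul U n y))"
proof -
  have "assoc U n x y = neg U (assoc U x n y)" using assms unfolding LN_alt_def by blast
  thus ?thesis unfolding assoc_def by (rule G.N1_aux)
qed

lemma lsum_Nil[simp]: "lsum U f [] = zer U" by (simp add: lsum_def)
lemma lsum_Cons[simp]: "lsum U f (x # xs) = add U (f x) (lsum U f xs)" by (simp add: lsum_def)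
lemma lsum_front: "lsum U f [0..<Suc m] = add U (f 0) (lsum U (\<lambda>i. f (Suc i)) [0..<m])"
proof -
  have 1: "[0..<Suc m] = 0 # map Suc [0..<m]" by (metis map_Suc_upt upt_conv_Cons zero_less_Suc)
  have 2: "lsum U f (map g xs) = lsum U (f \<circ> g) xs" for g xs by (induct xs) auto
  show ?thesis by (subst 1) (simp only: lsum_Cons 2 comp_def)
qed
lemma lsum_add: "lsum U (\<lambda>i. add U (f i) (g i)) xs = add U (lsum U f xs) (lsum U g xs)"
  by (induct xs) (simp_all add: algebra_simps)
lemma lsum_lin: assumes "\<And>x y. h (add U x y) = add U (h x) (h y)" "h (zer U) = zer U"
  shows "h (lsum U f xs) = lsum U (\<lambda>i. h (f i)) xs"
  using assms by (induct xs) auto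
end



declare apow.simps(2)[simp del]

locale AC = UA U for U :: "('k::field_char_0,'u) alg" +
  fixes a c :: 'u
  assumes aN: "a \<in> LN_alt U" and cN: "c \<in> LN_alt U" and comm: "mul U a c = mul U c a"
begin

abbreviation P where "P k \<equiv> apow U c k"
abbreviation D where "D x \<equiv> Dop U a c x"

lemma P0[simp]: "P 0 = one U" by simp
lemma PS: "P (Suc k) = c \<cdot> P k" by (simp add: apow.simps)
lemma P1[simp]: "P (Suc 0) = c" by (simp add: apow.simps)

lemma POW: "mul U (apow U c k) y = (mul U c ^^ k) y"
proof (induct k arbitrary: y)
  case 0 thus ?case by simp
next
  case (Suc k)
  have Pc: "mul U (apow U c k) c = apow U c (Suc k)"
  proof -
    have "mul U (apow U c k) c = (mul U c ^^ k) (mul U c (one U))" using Suc by simp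
    also have "\<dots> = (mul U c ^^ Suc k) (one U)" by (simp only: funpow_Suc_right comp_def)
    also have "\<dots> = mul U c (mul U (apow U c k) (one U))" using Suc[of "one U"] by simp
    finally show ?thesis by (simp add: apow.simps)
  qed
  have "mul U c (mul U (apow U c k) y) = sub U (add U (mul U (mul U c (apow U c k)) y) (mul U (mul U (apow U c k) c) y)) (mul U (apow U c k) (mul U c y))"
    by (rule N1[OF cN])
  hence "add U (mul U (apow U c (Suc k)) y) (mul U (apow U c (Suc k)) y) =
     add U (mul U c (mul U (apow U c k) y)) (mul U (apow U c k) (mul U c y))"
    using Pc by (simp add: algebra_simps apow.simps)
  also have "\<dots> = add U ((mul U c ^^ Suc k) y) ((mul U c ^^ Suc k) y)"
  proof -
    have e1: "mul U c ((mul U c^^k) y) = (mul U c ^^ Suc k) y" by simp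
    have e2: "(mul U c ^^ k)(mul U c y) = (mul U c ^^ Suc k) y" by (simp only: funpow_Suc_right comp_def)
    show ?thesis by (simp only: Suc e1 e2)
  qed
  finally show ?case by (rule two_cancel)
qed

lemma P_Suc: "P (Suc k) \<cdot> y = c \<cdot> (P k \<cdot> y)"
  by (simp only: POW funpow.simps comp_def)
lemma P_c: "P k \<cdot> (c \<cdot> y) = P (Suc k) \<cdot> y"
  by (simp only: POW funpow_Suc_right comp_def)
lemma P_c1: "P k \<cdot> c = P (Suc k)"
  using P_c[of k "one U"] by simp
lemma cP: "c \<cdot> (P k \<cdot> y) = (c \<cdot> P k) \<cdot> y"
  using P_Suc by (simp add: PS)

lemma DER: "D (x \<cdot> y) = D x \<cdot> y \<oplus> x \<cdot> D y"
proof -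
  note N1a = N1[OF aN] and N1c = N1[OF cN]
  have h1: "mul U c (mul U x y) = sub U (add U (mul U (mul U c x) y) (mul U (mul U x c) y)) (mul U x (mul U c y))" by (rule N1c)
  have h2: "mul U a (mul U x y) = sub U (add U (mul U (mul U a x) y) (mul U (mul U x a) y)) (mul U x (mul U a y))" by (rule N1a)
  have h3: "mul U a (mul U (mul U c x) y) = sub U (add U (mul U (mul U a (mul U c x)) y) (mul U (mul U (mul U c x) a) y)) (mul U (mul U c x) (mul U a y))" by (rule N1a)
  have h4: "mul U a (mul U (mul U x c) y) = sub U (add U (mul U (mul U a (mul U x c)) y) (mul U (mul U (mul U x c) a) y)) (mul U (mul U x c) (mul U a y))" by (rule N1a)
  have h5: "mul U a (mul U x (mul U c y)) = sub U (add U (mul U (mul U a x) (mul U c y)) (mul U (mul U x a) (mul U c y))) (mul U x (mul U a (mul U c y)))" by (rule N1a)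
  have h6: "mul U c (mul U (mul U a x) y) = sub U (add U (mul U (mul U c (mul U a x)) y) (mul U (mul U (mul U a x) c) y)) (mul U (mul U a x) (mul U c y))" by (rule N1c)
  have h7: "mul U c (mul U (mul U x a) y) = sub U (add U (mul U (mul U c (mul U x a)) y) (mul U (mul U (mul U x a) c) y)) (mul U (mul U x a) (mul U c y))" by (rule N1c)
  have h8: "mul U c (mul U x (mul U a y)) = sub U (add U (mul U (mul U c x) (mul U a y)) (mul U (mul U x c) (mul U a y))) (mul U x (mul U c (mul U a y)))" by (rule N1c)
  have h9: "mul U c (mul U x a) = sub U (add U (mul U (mul U c x) a) (mul U (mul U x c) a)) (mul U x (mul U c a))" by (rule N1c)
  have h10: "mul U a (mul U x c) = sub U (add U (mul U (mul U a x) c) (mul U (mul U x a) c)) (mul U x (mul U a c))" by (rule N1a)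
  show ?thesis unfolding Dop_def
    apply (simp only: h1 h2 bil h3 h4 h5 h6 h7 h8 h9 h10 comm)
    by (simp add: algebra_simps)
qed

lemma assoc_add_mid: "assoc U x (y \<oplus> z) w = assoc U x y w \<oplus> assoc U x z w"
  unfolding assoc_def by (simp add: bil algebra_simps)
lemma assoc_sub_mid: "assoc U x (y \<ominus> z) w = assoc U x y w \<ominus> assoc U x z w"
  unfolding assoc_def by (simp add: bil algebra_simps)
lemma assoc_zero_mid: "assoc U x (zer U) w = zer U"
  unfolding assoc_def by simp
lemma assoc_one: "assoc U (one U) y w = zer U"
  unfolding assoc_def by simp

lemma alt_D: "alt_trip U a c b = D b"
  unfolding alt_trip_def Dop_def comm by (simp add: algebra_simps)

lemma E1: "assoc U a c y \<oplus> assoc U a c y = c \<cdot> (a \<cdot> y) \<ominus> a \<cdot> (c \<cdot> y)"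
proof -
  have "assoc U c a y = neg U (assoc U a c y)" using cN unfolding LN_alt_def by blast
  thus ?thesis unfolding assoc_def comm by (rule G.E1_aux)
qed

definition S where "S m = lsum U (\<lambda>i. P i \<cdot> assoc U a c (P (m - i))) [0..<m]"

lemma S2: "S m \<oplus> S m = P (Suc m) \<cdot> a \<ominus> a \<cdot> P (Suc m)"
proof (induct m)
  case 0 thus ?case by (simp add: S_def comm)
next
  case (Suc m)
  have "S (Suc m) = assoc U a c (P (Suc m)) \<oplus> c \<cdot> S m"
    unfolding S_def lsum_front
    by (simp add: P_Suc lsum_lin[where h="mul U c", OF mul_add_r mul_zero_r])
  hence "S (Suc m) \<oplus> S (Suc m) = (assoc U a c (P (Suc m)) \<oplus> assoc U a c (P (Suc m))) \<oplus> c \<cdot> (S m \<oplus> S m)"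
    by (simp add: bil algebra_simps)
  also have "\<dots> = P (Suc (Suc m)) \<cdot> a \<ominus> a \<cdot> P (Suc (Suc m))"
    unfolding E1 Suc bil P_Suc[symmetric] PS[symmetric] by (simp add: algebra_simps)
  finally show ?case .
qed

lemma second: "P (Suc m) \<cdot> a = smul U (1/2) (a \<cdot> P (Suc m) \<oplus> P (Suc m) \<cdot> a) \<oplus> S m"
proof -
  have "S m = smul U (1/2) (P (Suc m) \<cdot> a \<ominus> a \<cdot> P (Suc m))"
    using half_add[of "S m"] S2 by simp
  hence "smul U (1/2) (a \<cdot> P (Suc m) \<oplus> P (Suc m) \<cdot> a) \<oplus> S m =
     smul U (1/2) ((a \<cdot> P (Suc m) \<oplus> P (Suc m) \<cdot> a) \<oplus> (P (Suc m) \<cdot> a \<ominus> a \<cdot> P (Suc m)))"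
    by (simp add: smul_add)
  also have "(a \<cdot> P (Suc m) \<oplus> P (Suc m) \<cdot> a) \<oplus> (P (Suc m) \<cdot> a \<ominus> a \<cdot> P (Suc m)) = P (Suc m) \<cdot> a \<oplus> P (Suc m) \<cdot> a"
    by (simp add: algebra_simps)
  finally show ?thesis by (simp add: half_add)
qed

lemma T1: "assoc U (P (Suc k)) y w = assoc U c (P k \<cdot> y) w \<oplus> c \<cdot> assoc U (P k) y w"
  unfolding assoc_def P_Suc by (simp add: bil algebra_simps)

definition Q where "Q m = lsum U (\<lambda>i. P i \<cdot> D (P (m - i))) [0..<m]"

lemma Qf: "Q m = a \<cdot> P (Suc m) \<ominus> P (Suc m) \<cdot> a"
proof (induct m)
  case 0 thus ?case by (simp add: Q_def comm)
next
  case (Suc m)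
  have "Q (Suc m) = D (P (Suc m)) \<oplus> c \<cdot> Q m"
    unfolding Q_def lsum_front
    by (simp add: P_Suc lsum_lin[where h="mul U c", OF mul_add_r mul_zero_r])
  also have "\<dots> = a \<cdot> P (Suc (Suc m)) \<ominus> P (Suc (Suc m)) \<cdot> a"
    unfolding Suc Dop_def bil P_Suc[symmetric] PS[symmetric] by (simp add: algebra_simps)
  finally show ?case .
qed

definition R where "R b m = lsum U (\<lambda>i. assoc U (P i) (D (P (m - i))) b) [0..<m]"

lemma Rrec: "R b (Suc m) = assoc U c (Q m) b \<oplus> c \<cdot> R b m"
proof -
  have "R b (Suc m) = lsum U (\<lambda>i. assoc U (P (Suc i)) (D (P (m - i))) b) [0..<m]"
    unfolding R_def lsum_front by (simp add: assoc_one)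
  also have "\<dots> = lsum U (\<lambda>i. assoc U c (P i \<cdot> D (P (m - i))) b \<oplus> c \<cdot> assoc U (P i) (D (P (m - i))) b) [0..<m]"
    by (simp only: T1)
  also have "\<dots> = assoc U c (Q m) b \<oplus> c \<cdot> R b m"
    unfolding lsum_add Q_def R_def
    by (simp add: lsum_lin[where h="mul U c", OF mul_add_r mul_zero_r]
                  lsum_lin[where h="\<lambda>z. assoc U c z b", OF assoc_add_mid assoc_zero_mid])
  finally show ?thesis .
qed

lemma K: "assoc U c (P n \<cdot> a \<oplus> a \<cdot> P n) b = P n \<cdot> D b"
proof -
  note N1a = N1[OF aN]
  let ?p = "P n"
  have k1: "a \<cdot> (?p \<cdot> b) = (a \<cdot> ?p) \<cdot> b \<oplus> (?p \<cdot> a) \<cdot> b \<ominus> ?p \<cdot> (a \<cdot> b)" by (rule N1a)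
  have k2: "a \<cdot> ((c \<cdot> ?p) \<cdot> b) = (a \<cdot> (c \<cdot> ?p)) \<cdot> b \<oplus> ((c \<cdot> ?p) \<cdot> a) \<cdot> b \<ominus> (c \<cdot> ?p) \<cdot> (a \<cdot> b)" by (rule N1a)
  have k3: "a \<cdot> ((c \<cdot> ?p) \<cdot> b) \<ominus> c \<cdot> (a \<cdot> (?p \<cdot> b)) = (a \<cdot> (c \<cdot> ?p) \<ominus> c \<cdot> (a \<cdot> ?p)) \<cdot> b \<oplus> ?p \<cdot> (a \<cdot> (c \<cdot> b) \<ominus> c \<cdot> (a \<cdot> b))"
    using DER[of ?p b] unfolding Dop_def cP .
  have o1: "(a \<cdot> ?p) \<cdot> b = a \<cdot> (?p \<cdot> b) \<ominus> (?p \<cdot> a) \<cdot> b \<oplus> ?p \<cdot> (a \<cdot> b)"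
    using k1 by (rule G.g1)
  have o2: "c \<cdot> (a \<cdot> (?p \<cdot> b)) = a \<cdot> ((c \<cdot> ?p) \<cdot> b) \<ominus> (a \<cdot> (c \<cdot> ?p) \<ominus> c \<cdot> (a \<cdot> ?p)) \<cdot> b \<ominus> ?p \<cdot> (a \<cdot> (c \<cdot> b) \<ominus> c \<cdot> (a \<cdot> b))"
    using k3 by (rule G.g2)
  show ?thesis unfolding assoc_def Dop_def
    apply (simp only: bil cP o1 o2 k2)
    by (simp add: algebra_simps)
qed

lemma first_aux: "A \<oplus> A \<oplus> R b m = smul U (of_nat (Suc m)) (P m \<cdot> D b)"
  if "A = assoc U (P (Suc m)) a b" for A
  using that
proof (induct m arbitrary: A)
  case 0
  have "assoc U c (a \<oplus> a) b = D b" using K[of 0] by simp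
  thus ?case using 0 by (simp add: R_def assoc_add_mid)
next
  case (Suc m)
  let ?A = "assoc U (P (Suc m)) a b"
  have IH: "?A \<oplus> ?A \<oplus> R b m = smul U (of_nat (Suc m)) (P m \<cdot> D b)" using Suc(1) by simp
  have "assoc U (P (Suc (Suc m))) a b \<oplus> assoc U (P (Suc (Suc m))) a b \<oplus> R b (Suc m)
     = (assoc U c (P (Suc m) \<cdot> a) b \<oplus> assoc U c (a \<cdot> P (Suc m)) b) \<oplus> c \<cdot> (?A \<oplus> ?A \<oplus> R b m)"
    unfolding T1[of "Suc m"] Rrec Qf assoc_sub_mid by (simp add: bil algebra_simps)
  also have "\<dots> = P (Suc m) \<cdot> D b \<oplus> smul U (of_nat (Suc m)) (P (Suc m) \<cdot> D b)"
    unfolding IH unfolding assoc_add_mid[symmetric] K mul_smul_r P_Suc[symmetric] ..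
  also have "\<dots> = smul U (of_nat (Suc (Suc m))) (P (Suc m) \<cdot> D b)"
    by (simp only: smul_of_nat_Suc G.add.commute)
  finally show ?case using Suc(2) by simp
qed

lemma first: "assoc U (P (Suc m)) a b = smul U (of_nat (Suc m) / 2) (P m \<cdot> D b) \<ominus> smul U (1/2) (R b m)"
proof -
  let ?A = "assoc U (P (Suc m)) a b"
  have "?A \<oplus> ?A = smul U (of_nat (Suc m)) (P m \<cdot> D b) \<ominus> R b m"
    using first_aux[OF refl, of m b] by (simp add: algebra_simps)
  hence "?A = smul U (1/2) (smul U (of_nat (Suc m)) (P m \<cdot> D b) \<ominus> R b m)"
    using half_add[of ?A] by simp
  thus ?thesis by (simp add: smul_sub smul_smul)
qed

end

theorem mainTheorem2:
  fixes T :: "('k::field_char_0, 't) lts" and U :: "('k, 'u) alg" and \<iota> :: "'t \<Rightarrow> 'u"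
  assumes "lts_axioms T" and "is_UEA T U \<iota>"
  shows "(\<forall>n a b c. n \<ge> 1 \<longrightarrow>
            assoc U (apow U (\<iota> c) n) (\<iota> a) (\<iota> b) =
            sub U (smul U (of_nat n / 2) (mul U (apow U (\<iota> c) (n - 1)) (\<iota> (trip T a c b))))
                  (smul U (1 / 2) (lsum U (\<lambda>i. assoc U (apow U (\<iota> c) i)
                                              (Dop U (\<iota> a) (\<iota> c) (apow U (\<iota> c) (n - 1 - i))) (\<iota> b))
                                   [0..<n - 1])))
       \<and> (\<forall>n a c. n \<ge> 1 \<longrightarrow>
            mul U (apow U (\<iota> c) n) (\<iota> a) =
            add U (smul U (1 / 2) (add U (mul U (\<iota> a) (apow U (\<iota> c) n)) (mul U (apow U (\<iota> c) n) (\<iota> a))))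
                  (lsum U (\<lambda>i. mul U (apow U (\<iota> c) i) (assoc U (\<iota> a) (\<iota> c) (apow U (\<iota> c) (n - 1 - i))))
                   [0..<n - 1]))"
proof -
  from assms(2) have ua: "unital_algebra U" and hom: "lts_hom_LN T U \<iota>" and cm: "commuting_image U \<iota>"
    unfolding is_UEA_def by auto
  have ACi: "AC U (\<iota> a) (\<iota> c)" for a c
    using ua hom cm unfolding AC_def AC_axioms_def UA_def lts_hom_LN_def commuting_image_def by auto
  show ?thesis
  proof (intro conjI allI impI)
    fix n :: nat and a b c :: 't assume "1 \<le> n"
    then obtain m where n: "n = Suc m" by (cases n) auto
    interpret AC U "\<iota> a" "\<iota> c" by (rule ACi)
    have tr: "\<iota> (trip T a c b) = Dop U (\<iota> a) (\<iota> c) (\<iota> b)"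
      using hom alt_D unfolding lts_hom_LN_def by simp
    show "assoc U (apow U (\<iota> c) n) (\<iota> a) (\<iota> b) =
            sub U (smul U (of_nat n / 2) (mul U (apow U (\<iota> c) (n - 1)) (\<iota> (trip T a c b))))
                  (smul U (1 / 2) (lsum U (\<lambda>i. assoc U (apow U (\<iota> c) i)
                                              (Dop U (\<iota> a) (\<iota> c) (apow U (\<iota> c) (n - 1 - i))) (\<iota> b))
                                   [0..<n - 1]))"
      unfolding n tr using first[of m "\<iota> b"] by (simp add: R_def)
  next
    fix n :: nat and a c :: 't assume "1 \<le> n"
    then obtain m where n: "n = Suc m" by (cases n) auto
    interpret AC U "\<iota> a" "\<iota> c" by (rule ACi)
    show "mul U (apow U (\<iota> c) n) (\<iota> a) =
            add U (smul U (1 / 2) (add U (mul U (\<iota> a) (apow U (\<iota> c) n)) (mul U (apow U (\<iota> c) n) (\<iota> a))))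
                  (lsum U (\<lambda>i. mul U (apow U (\<iota> c) i) (assoc U (\<iota> a) (\<iota> c) (apow U (\<iota> c) (n - 1 - i))))
                   [0..<n - 1])"
      unfolding n using second[of m] by (simp add: S_def)
  qed
qed

end
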